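(* Let $S=K[x_1,\dots,x_n]$ with $K$ a field or $\mathbb{Z}$, let $I\subseteq S$ be a monomial ideal, and let $C_\bullet$ be a minimal free resolution of $S/I$ whose free modules are given $\mathbb{N}^n$-homogeneous bases (so all matrices are $\mathbb{N}^n$-graded). If $Z$ is a subset of the variables and $T=S/(Z)$, then the pruning $P(C_\bullet,Z)$ is a minimal free resolution of $S/I\otimes_S T$ as a $T$-module.
   Context: Pruning. Let $C_\bullet$ be a sequence of free $S$-modules with chosen bases $F_t\xrightarrow{A_t}F_{t-1}\to\cdots\to F_1\xrightarrow{A_1}F_0$, so each map is a matrix $A_i$ (columns indexed by the basis of $F_i$, rows by the basis of $F_{i-1}$). The pruning $P(C_\bullet,Z)$ is obtained by the following procedure: for $i=1,2,\dots,t$ in turn, replace the current matrix $A_i$ by the matrix obtained by setting every variable of $Z$ equal to $0$; let $U$ be the set of columns of this new $A_i$ that are identically zero; then delete from $F_i$ the basis elements indexed by $U$, delete from $A_i$ the columns indexed by $U$, and delete from $A_{i+1}$ (if $i<t$) the rows indexed by $U$. The resulting sequence of matrices and (shrunken) free modules is regarded as a sequence of free $T$-modules and maps, $T=S/(Z)$. *)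

theory Defs
  imports Main "HOL-Library.Poly_Mapping"
begin

text \<open>A free module with a chosen basis indexed by a finite set B of naturals is
  modelled as vectors nat \<Rightarrow> S supported on B; a map F_i \<rightarrow> F_(i-1) is a matrix
  M row col (rows indexed by the basis of F_(i-1), columns by that of F_i).\<close>

type_synonym ('v, 'k) mpoly = "('v \<Rightarrow>\<^sub>0 nat) \<Rightarrow>\<^sub>0 'k"

definition setZ :: "'v set \<Rightarrow> ('v, 'k::zero) mpoly \<Rightarrow> ('v, 'k) mpoly" where
  "setZ Z f = Abs_poly_mapping (\<lambda>a. if (\<forall>z\<in>Z. Poly_Mapping.lookup a z = 0) then Poly_Mapping.lookup f a else 0)"

text \<open>The ring T = S/(Z), realised as the subring of polynomials not involving Z.\<close>
definition polyT :: "'v set \<Rightarrow> ('v, 'k::zero) mpoly set" where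
  "polyT Z = {f. \<forall>a\<in>Poly_Mapping.keys f. \<forall>z\<in>Z. Poly_Mapping.lookup a z = 0}"

definition ideal_gen :: "'a::comm_ring_1 set \<Rightarrow> 'a set \<Rightarrow> 'a set" where
  "ideal_gen R G = {\<Sum>g\<in>F. c g * g | F c. finite F \<and> F \<subseteq> G \<and> (\<forall>g\<in>F. c g \<in> R)}"

definition monomial_ideal :: "('v, 'k::comm_ring_1) mpoly set \<Rightarrow> bool" where
  "monomial_ideal I \<longleftrightarrow> (\<exists>M. I = ideal_gen UNIV ((\<lambda>a. Poly_Mapping.single a 1) ` M))"

definition vecs :: "'a::zero set \<Rightarrow> nat set \<Rightarrow> (nat \<Rightarrow> 'a) set" where
  "vecs R B = {x. (\<forall>j\<in>B. x j \<in> R) \<and> (\<forall>j. j \<notin> B \<longrightarrow> x j = 0)}"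

definition mat_app :: "nat set \<Rightarrow> nat set \<Rightarrow> (nat \<Rightarrow> nat \<Rightarrow> 'a::comm_ring_1) \<Rightarrow> (nat \<Rightarrow> 'a) \<Rightarrow> (nat \<Rightarrow> 'a)" where
  "mat_app Bc Br M x = (\<lambda>j. if j \<in> Br then (\<Sum>k\<in>Bc. M j k * x k) else 0)"

definition aug :: "(nat \<Rightarrow> 'a::comm_ring_1) \<Rightarrow> nat set \<Rightarrow> (nat \<Rightarrow> 'a) \<Rightarrow> 'a" where
  "aug \<epsilon> B0 x = (\<Sum>j\<in>B0. \<epsilon> j * x j)"

text \<open>F_t \<rightarrow> ... \<rightarrow> F_0 (basis of F_i indexed by B i, map F_i \<rightarrow> F_(i-1) given by A i),
  together with an augmentation F_0 \<rightarrow> R/J (basis element j \<mapsto> class of \<epsilon> j),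
  is a free resolution of R/J over the ring R (a subring of the ambient ring).\<close>
definition is_free_res ::
  "'a::comm_ring_1 set \<Rightarrow> 'a set \<Rightarrow> nat \<Rightarrow> (nat \<Rightarrow> nat set) \<Rightarrow> (nat \<Rightarrow> nat \<Rightarrow> nat \<Rightarrow> 'a) \<Rightarrow> (nat \<Rightarrow> 'a) \<Rightarrow> bool" where
  "is_free_res R J t B A \<epsilon> \<longleftrightarrow>
     (\<forall>i\<le>t. finite (B i))
   \<and> (\<forall>i\<in>{1..t}. \<forall>j\<in>B (i - 1). \<forall>k\<in>B i. A i j k \<in> R)
   \<and> (\<forall>j\<in>B 0. \<epsilon> j \<in> R)
   \<and> (\<forall>a\<in>R. \<exists>x\<in>vecs R (B 0). a - aug \<epsilon> (B 0) x \<in> J)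
   \<and> {x \<in> vecs R (B 0). aug \<epsilon> (B 0) x \<in> J}
       = (if 0 < t then mat_app (B 1) (B 0) (A 1) ` vecs R (B 1) else {\<lambda>_. 0})
   \<and> (\<forall>i\<in>{1..t}. {x \<in> vecs R (B i). mat_app (B i) (B (i - 1)) (A i) x = (\<lambda>_. 0)}
       = (if i < t then mat_app (B (Suc i)) (B i) (A (Suc i)) ` vecs R (B (Suc i)) else {\<lambda>_. 0}))"

text \<open>Minimal: every matrix entry lies in the ideal generated by the variables,
  i.e. has zero constant term.\<close>
definition is_min_free_res ::
  "('v, 'k::comm_ring_1) mpoly set \<Rightarrow> ('v, 'k) mpoly set \<Rightarrow> nat \<Rightarrow> (nat \<Rightarrow> nat set)
     \<Rightarrow> (nat \<Rightarrow> nat \<Rightarrow> nat \<Rightarrow> ('v, 'k) mpoly) \<Rightarrow> (nat \<Rightarrow> ('v, 'k) mpoly) \<Rightarrow> bool" where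
  "is_min_free_res R J t B A \<epsilon> \<longleftrightarrow> is_free_res R J t B A \<epsilon>
     \<and> (\<forall>i\<in>{1..t}. \<forall>j\<in>B (i - 1). \<forall>k\<in>B i. Poly_Mapping.lookup (A i j k) 0 = 0)"

text \<open>N^n-homogeneous bases: basis element k of F_i has multidegree dg i k, and all
  maps (including the augmentation to S/I, whose generator has degree 0) are homogeneous
  of degree 0.\<close>
definition multigraded ::
  "nat \<Rightarrow> (nat \<Rightarrow> nat set) \<Rightarrow> (nat \<Rightarrow> nat \<Rightarrow> nat \<Rightarrow> ('v, 'k::zero) mpoly) \<Rightarrow> (nat \<Rightarrow> ('v, 'k) mpoly)
     \<Rightarrow> (nat \<Rightarrow> nat \<Rightarrow> ('v \<Rightarrow>\<^sub>0 nat)) \<Rightarrow> bool" where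
  "multigraded t B A \<epsilon> dg \<longleftrightarrow>
     (\<forall>i\<in>{1..t}. \<forall>j\<in>B (i - 1). \<forall>k\<in>B i. \<forall>a\<in>Poly_Mapping.keys (A i j k). a + dg (i - 1) j = dg i k)
   \<and> (\<forall>j\<in>B 0. \<forall>a\<in>Poly_Mapping.keys (\<epsilon> j). a = dg 0 j)"

text \<open>Pruning: the surviving basis indices. Step i deletes the columns of
  A_i (rows restricted to the survivors of step i-1) that vanish after setting Z to 0.\<close>
fun pruned_basis :: "'v set \<Rightarrow> (nat \<Rightarrow> nat set) \<Rightarrow> (nat \<Rightarrow> nat \<Rightarrow> nat \<Rightarrow> ('v, 'k::zero) mpoly) \<Rightarrow> nat \<Rightarrow> nat set" where
  "pruned_basis Z B A 0 = B 0"
| "pruned_basis Z B A (Suc i) =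
     {k \<in> B (Suc i). \<exists>j\<in>pruned_basis Z B A i. setZ Z (A (Suc i) j k) \<noteq> 0}"

text \<open>Pruned matrices: A_i with Z set to 0 (restricted to surviving rows/columns via pruned_basis).\<close>
definition pruned_mats :: "'v set \<Rightarrow> (nat \<Rightarrow> nat \<Rightarrow> nat \<Rightarrow> ('v, 'k::zero) mpoly) \<Rightarrow> nat \<Rightarrow> nat \<Rightarrow> nat \<Rightarrow> ('v, 'k) mpoly" where
  "pruned_mats Z A = (\<lambda>i j k. setZ Z (A i j k))"

end

theory Submission imports Defs begin

definition zf :: "'v set \<Rightarrow> ('v \<Rightarrow>\<^sub>0 nat) \<Rightarrow> bool" where
  "zf Z a \<longleftrightarrow> (\<forall>z\<in>Z. Poly_Mapping.lookup a z = 0)"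

lemma zf_add[simp]: "zf Z (a + b) \<longleftrightarrow> zf Z a \<and> zf Z b"
  by (auto simp: zf_def lookup_add)

lemma zf_0[simp]: "zf Z 0"
  by (simp add: zf_def)

lemma lookup_setZ: "Poly_Mapping.lookup (setZ Z f) a = (if zf Z a then Poly_Mapping.lookup f a else 0)"
proof -
  have "finite {a. (if zf Z a then Poly_Mapping.lookup f a else 0) \<noteq> 0}"
    by (rule finite_subset[OF _ finite_lookup[of f]]) auto
  then show ?thesis unfolding setZ_def zf_def by simp
qed

lemma setZ_add: "setZ Z (f + g) = setZ Z f + setZ Z g"
  by (rule poly_mapping_eqI) (simp add: lookup_setZ lookup_add)

lemma setZ_diff: "setZ Z (f - g) = setZ Z f - setZ Z (g::('v,'k::ab_group_add) mpoly)"
  by (rule poly_mapping_eqI) (simp add: lookup_setZ lookup_minus)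

lemma setZ_0[simp]: "setZ Z 0 = 0"
  by (rule poly_mapping_eqI) (simp add: lookup_setZ)

lemma setZ_sum: "setZ Z (sum f X) = sum (\<lambda>x. setZ Z (f x)) X"
  by (rule poly_mapping_eqI) (simp add: lookup_setZ lookup_sum)

lemma setZ_id: "(\<And>a. a \<in> Poly_Mapping.keys f \<Longrightarrow> zf Z a) \<Longrightarrow> setZ Z f = f"
  by (rule poly_mapping_eqI) (auto simp: lookup_setZ in_keys_iff)

lemma setZ_null: "(\<And>a. a \<in> Poly_Mapping.keys f \<Longrightarrow> \<not> zf Z a) \<Longrightarrow> setZ Z f = 0"
  by (rule poly_mapping_eqI) (auto simp: lookup_setZ in_keys_iff)

lemma keys_setZ: "a \<in> Poly_Mapping.keys (setZ Z f) \<Longrightarrow> zf Z a"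
  by (auto simp: lookup_setZ in_keys_iff split: if_splits)

lemma setZ_idem[simp]: "setZ Z (setZ Z f) = setZ Z f"
  by (rule setZ_id) (rule keys_setZ)

lemma polyT_iff: "f \<in> polyT Z \<longleftrightarrow> setZ Z f = f"
proof
  assume "f \<in> polyT Z" then show "setZ Z f = f"
    by (intro setZ_id) (auto simp: polyT_def zf_def)
next
  assume "setZ Z f = f" then show "f \<in> polyT Z"
    using keys_setZ[of _ Z f] by (auto simp: polyT_def zf_def)
qed

lemma setZ_in_polyT: "setZ Z f \<in> polyT Z"
  by (simp add: polyT_iff)

lemma setZ_mult: "setZ Z (f * g) = setZ Z f * setZ Z (g::('v,'k::comm_ring_1) mpoly)"
proof -
  define fz where "fz = setZ Z f"
  define fn where "fn = f - setZ Z f"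
  define gz where "gz = setZ Z g"
  define gn where "gn = g - setZ Z g"
  have kfn: "\<not> zf Z a" if "a \<in> Poly_Mapping.keys fn" for a
    using that by (auto simp: fn_def in_keys_iff lookup_minus lookup_setZ split: if_splits)
  have kgn: "\<not> zf Z a" if "a \<in> Poly_Mapping.keys gn" for a
    using that by (auto simp: gn_def in_keys_iff lookup_minus lookup_setZ split: if_splits)
  have kfz: "zf Z a" if "a \<in> Poly_Mapping.keys fz" for a
    using that keys_setZ fz_def by blast
  have kgz: "zf Z a" if "a \<in> Poly_Mapping.keys gz" for a
    using that keys_setZ gz_def by blast
  have f: "f = fz + fn" and g: "g = gz + gn" by (simp_all add: fz_def fn_def gz_def gn_def)
  have e: "f * g = fz * gz + fz * gn + fn * gz + fn * gn"
    by (simp add: f g algebra_simps)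
  have 1: "setZ Z (fz * gz) = fz * gz"
    by (rule setZ_id) (use keys_mult[of fz gz] kfz kgz in fastforce)
  have 2: "setZ Z (fz * gn) = 0"
    by (rule setZ_null) (use keys_mult[of fz gn] kgn in fastforce)
  have 3: "setZ Z (fn * gz) = 0"
    by (rule setZ_null) (use keys_mult[of fn gz] kfn in fastforce)
  have 4: "setZ Z (fn * gn) = 0"
    by (rule setZ_null) (use keys_mult[of fn gn] kfn in fastforce)
  show ?thesis using 1 2 3 4 by (simp add: e setZ_add fz_def gz_def)
qed

lemma zf_UNIV: "zf UNIV a \<longleftrightarrow> a = 0"
  by (auto simp: zf_def poly_mapping_eqI)

lemma setZ_UNIV: "setZ UNIV f = Poly_Mapping.single 0 (Poly_Mapping.lookup f 0)"
  by (rule poly_mapping_eqI) (auto simp: lookup_setZ zf_UNIV lookup_single when_def)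

lemma const_mult: "Poly_Mapping.lookup (f * g) 0 = Poly_Mapping.lookup f 0 * Poly_Mapping.lookup (g::('v,'k::comm_ring_1) mpoly) 0"
proof -
  have "Poly_Mapping.lookup (f * g) 0 = Poly_Mapping.lookup (setZ UNIV (f * g)) 0"
    by (simp add: lookup_setZ)
  also have "\<dots> = Poly_Mapping.lookup f 0 * Poly_Mapping.lookup g 0"
    by (simp only: setZ_mult setZ_UNIV mult_single) simp
  finally show ?thesis .
qed

lemma const_setZ[simp]: "Poly_Mapping.lookup (setZ Z f) 0 = Poly_Mapping.lookup f 0"
  by (simp add: lookup_setZ)


lemma ideal_gen_mult:
  assumes "f \<in> ideal_gen UNIV G" shows "r * f \<in> ideal_gen UNIV G"
proof -
  from assms obtain F c where f: "f = (\<Sum>g\<in>F. c g * g)" "finite F" "F \<subseteq> G"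
    by (auto simp: ideal_gen_def)
  have "r * f = (\<Sum>g\<in>F. (r * c g) * g)" by (simp add: f sum_distrib_left mult.assoc)
  then show ?thesis using f unfolding ideal_gen_def
    by (intro CollectI exI[of _ F] exI[of _ "\<lambda>g. r * c g"]) auto
qed

lemma ideal_gen_0: "0 \<in> ideal_gen UNIV G"
  unfolding ideal_gen_def by (rule CollectI, rule exI[of _ "{}"]) auto

lemma monomial_setZ_in:
  assumes "monomial_ideal I" "f \<in> I" shows "setZ Z f \<in> (I :: ('v,'k::comm_ring_1) mpoly set)"
proof -
  from assms(1) obtain M where I: "I = ideal_gen UNIV ((\<lambda>a. Poly_Mapping.single a 1) ` M)"
    by (auto simp: monomial_ideal_def)
  from assms(2) obtain F c where f: "f = (\<Sum>g\<in>F. c g * g)" "finite F"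
    "F \<subseteq> (\<lambda>a. Poly_Mapping.single a 1) ` M"
    by (auto simp: ideal_gen_def I)
  have sg: "setZ Z g = (if setZ Z g = g then g else 0)" if "g \<in> F" for g
  proof -
    from that f(3) obtain a where g: "g = Poly_Mapping.single a (1::'k)" by auto
    show ?thesis
    proof (cases "zf Z a")
      case True
      then have "setZ Z g = g" by (intro setZ_id) (auto simp: g)
      then show ?thesis by simp
    next
      case False
      then have "setZ Z g = 0" by (intro setZ_null) (auto simp: g)
      then show ?thesis by auto
    qed
  qed
  have "setZ Z f = (\<Sum>g\<in>F. (if setZ Z g = g then setZ Z (c g) else 0) * g)"
    unfolding f(1) setZ_sum setZ_mult
    by (rule sum.cong[OF refl]) (subst sg, auto)
  with f(2,3) show ?thesis unfolding I ideal_gen_def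
    by (intro CollectI exI[of _ F] exI[of _ "\<lambda>g. (if setZ Z g = g then setZ Z (c g) else 0)"]) auto
qed

lemma polyT0[simp]: "0 \<in> polyT Z"
  by (simp add: polyT_iff)

lemma vecs_mono: "B \<subseteq> B' \<Longrightarrow> vecs R B \<subseteq> vecs UNIV B'"
  by (auto simp: vecs_def)

lemma const_mat_app:
  assumes "\<And>k. k \<in> Bc \<Longrightarrow> Poly_Mapping.lookup (M j k) 0 = 0"
  shows "Poly_Mapping.lookup (mat_app Bc Br (M :: nat \<Rightarrow> nat \<Rightarrow> ('v,'k::comm_ring_1) mpoly) y j) 0 = 0"
  using assms by (simp add: mat_app_def lookup_sum const_mult)

lemma mat_app_zero[simp]: "mat_app Bc Br M (\<lambda>_. 0) = (\<lambda>_. 0)"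
  by (simp add: mat_app_def fun_eq_iff)

locale prune_setup =
  fixes I :: "('v, 'k::comm_ring_1) mpoly set"
    and Z :: "'v set"
    and t :: nat
    and B :: "nat \<Rightarrow> nat set"
    and A :: "nat \<Rightarrow> nat \<Rightarrow> nat \<Rightarrow> ('v, 'k) mpoly"
    and \<epsilon> :: "nat \<Rightarrow> ('v, 'k) mpoly"
    and dg :: "nat \<Rightarrow> nat \<Rightarrow> ('v \<Rightarrow>\<^sub>0 nat)"
  assumes mon: "monomial_ideal I"
    and res: "is_min_free_res UNIV I t B A \<epsilon>"
    and mg: "multigraded t B A \<epsilon> dg"
begin

lemma H_fin: "i \<le> t \<Longrightarrow> finite (B i)"
  using res by (simp add: is_min_free_res_def is_free_res_def)
lemma H_surj: "\<exists>x\<in>vecs UNIV (B 0). a - aug \<epsilon> (B 0) x \<in> I"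
  using res by (simp add: is_min_free_res_def is_free_res_def)
lemma H_ker0: "{x \<in> vecs UNIV (B 0). aug \<epsilon> (B 0) x \<in> I}
       = (if 0 < t then mat_app (B 1) (B 0) (A 1) ` vecs UNIV (B 1) else {\<lambda>_. 0})"
  using res by (simp add: is_min_free_res_def is_free_res_def)
lemma H_ker: "i \<in> {1..t} \<Longrightarrow> {x \<in> vecs UNIV (B i). mat_app (B i) (B (i - 1)) (A i) x = (\<lambda>_. 0)}
       = (if i < t then mat_app (B (Suc i)) (B i) (A (Suc i)) ` vecs UNIV (B (Suc i)) else {\<lambda>_. 0})"
  using res by (simp add: is_min_free_res_def is_free_res_def)
lemma H_min: "i \<in> {1..t} \<Longrightarrow> j \<in> B (i - 1) \<Longrightarrow> k \<in> B i \<Longrightarrow> Poly_Mapping.lookup (A i j k) 0 = 0"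
  using res by (simp add: is_min_free_res_def)
lemma H_deg: "i \<in> {1..t} \<Longrightarrow> j \<in> B (i - 1) \<Longrightarrow> k \<in> B i \<Longrightarrow> a \<in> Poly_Mapping.keys (A i j k)
   \<Longrightarrow> a + dg (i - 1) j = dg i k"
  using mg by (simp add: multigraded_def)
lemma H_eps: "j \<in> B 0 \<Longrightarrow> a \<in> Poly_Mapping.keys (\<epsilon> j) \<Longrightarrow> a = dg 0 j"
  using mg by (simp add: multigraded_def)

lemma I0: "0 \<in> I"
  using mon ideal_gen_0 by (auto simp: monomial_ideal_def)
lemma Imult: "f \<in> I \<Longrightarrow> r * f \<in> I"
  using mon ideal_gen_mult by (auto simp: monomial_ideal_def)

lemma img_const:
  assumes "Suc i \<le> t" "j \<in> B i"
  shows "Poly_Mapping.lookup (mat_app (B (Suc i)) (B i) (A (Suc i)) y j) 0 = 0"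
  by (rule const_mat_app) (use H_min[of "Suc i" j] assms in auto)

lemma nonmin0:
  assumes "w \<in> vecs UNIV (B 0)" "aug \<epsilon> (B 0) w \<in> I" "j \<in> B 0" "Poly_Mapping.lookup (w j) 0 \<noteq> 0"
  shows False
proof -
  have wi: "w \<in> (if 0 < t then mat_app (B 1) (B 0) (A 1) ` vecs UNIV (B 1) else {\<lambda>_. 0})"
    using assms(1,2) H_ker0 by blast
  then show False
  proof (cases "0 < t")
    case True
    with wi obtain y where "w = mat_app (B 1) (B 0) (A 1) y" by auto
    with img_const[of 0 j y] True assms(3,4) show False by simp
  next
    case False
    with wi assms(4) show False by simp
  qed
qed

lemma nonmin:
  assumes "i \<in> {1..t}" "w \<in> vecs UNIV (B i)" "mat_app (B i) (B (i - 1)) (A i) w = (\<lambda>_. 0)"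
    "k \<in> B i" "Poly_Mapping.lookup (w k) 0 \<noteq> 0"
  shows False
proof -
  have wi: "w \<in> (if i < t then mat_app (B (Suc i)) (B i) (A (Suc i)) ` vecs UNIV (B (Suc i)) else {\<lambda>_. 0})"
    using assms(1,2,3) H_ker[OF assms(1)] by blast
  then show False
  proof (cases "i < t")
    case True
    with wi obtain y where "w = mat_app (B (Suc i)) (B i) (A (Suc i)) y" by auto
    with img_const[of i k y] True assms(4,5) show False by simp
  next
    case False
    with wi assms(5) show False by simp
  qed
qed

lemma B0_zf:
  assumes j: "j \<in> B 0" shows "zf Z (dg 0 j)"
proof (rule ccontr)
  assume nz: "\<not> zf Z (dg 0 j)"
  obtain x where x: "x \<in> vecs UNIV (B 0)" "1 - aug \<epsilon> (B 0) x \<in> I"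
    using H_surj[of 1] by blast
  define w where "w = (\<lambda>l. (if l = j then 1 else 0) - \<epsilon> j * x l)"
  have fin: "finite (B 0)" using H_fin by simp
  have wv: "w \<in> vecs UNIV (B 0)"
    using x(1) j by (auto simp: vecs_def w_def)
  have "aug \<epsilon> (B 0) w = (\<Sum>l\<in>B 0. (if l = j then \<epsilon> l else 0)) - (\<Sum>l\<in>B 0. \<epsilon> j * (\<epsilon> l * x l))"
    unfolding aug_def w_def
    by (simp add: right_diff_distrib sum_subtractf mult.left_commute) (rule sum.cong, auto)
  also have "\<dots> = \<epsilon> j * (1 - aug \<epsilon> (B 0) x)"
    using fin j by (simp add: aug_def sum_distrib_left right_diff_distrib)
  finally have "aug \<epsilon> (B 0) w \<in> I" using Imult[OF x(2)] by simp
  moreover have "Poly_Mapping.lookup (\<epsilon> j) 0 = 0"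
  proof (rule ccontr)
    assume "Poly_Mapping.lookup (\<epsilon> j) 0 \<noteq> 0"
    then have "0 = dg 0 j" using H_eps[OF j, of 0] by (simp add: in_keys_iff)
    with nz show False by simp
  qed
  then have "Poly_Mapping.lookup (w j) 0 \<noteq> 0"
    by (simp add: w_def lookup_minus const_mult)
  ultimately show False using nonmin0[OF wv _ j] by blast
qed

definition Pb :: "nat \<Rightarrow> nat set" where "Pb i = {k \<in> B i. zf Z (dg i k)}"

lemma Pb_sub: "Pb i \<subseteq> B i" by (auto simp: Pb_def)
lemma Pb0: "Pb 0 = B 0" using B0_zf by (auto simp: Pb_def)

lemma E1: "i \<in> {1..t} \<Longrightarrow> j \<in> B (i - 1) \<Longrightarrow> k \<in> B i \<Longrightarrow> zf Z (dg i k) \<Longrightarrow> setZ Z (A i j k) = A i j k"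
  by (rule setZ_id) (metis H_deg zf_add)

lemma E2: "i \<in> {1..t} \<Longrightarrow> j \<in> B (i - 1) \<Longrightarrow> k \<in> B i \<Longrightarrow> zf Z (dg i k) \<Longrightarrow> A i j k \<noteq> 0 \<Longrightarrow> zf Z (dg (i - 1) j)"
proof -
  assume a: "i \<in> {1..t}" "j \<in> B (i - 1)" "k \<in> B i" "zf Z (dg i k)" "A i j k \<noteq> 0"
  then obtain b where "b \<in> Poly_Mapping.keys (A i j k)"
    by (metis ex_in_conv keys_eq_empty)
  with a H_deg[of i j k b] show ?thesis by (metis zf_add)
qed

lemma E3: "i \<in> {1..t} \<Longrightarrow> j \<in> B (i - 1) \<Longrightarrow> k \<in> B i \<Longrightarrow> zf Z (dg (i - 1) j) \<Longrightarrow> \<not> zf Z (dg i k) \<Longrightarrow> setZ Z (A i j k) = 0"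
  by (rule setZ_null) (metis H_deg zf_add)


lemma pb: "i \<le> t \<Longrightarrow> pruned_basis Z B A i = Pb i"
proof (induction i)
  case 0 then show ?case using Pb0 by simp
next
  case (Suc i)
  then have IH: "pruned_basis Z B A i = Pb i" by simp
  have iS: "Suc i \<in> {1..t}" using Suc.prems by simp
  have "k \<in> pruned_basis Z B A (Suc i) \<longleftrightarrow> k \<in> Pb (Suc i)" for k
  proof
    assume "k \<in> pruned_basis Z B A (Suc i)"
    then obtain j where k: "k \<in> B (Suc i)" and j: "j \<in> Pb i" and nz: "setZ Z (A (Suc i) j k) \<noteq> 0"
      using IH by auto
    then obtain a where "a \<in> Poly_Mapping.keys (setZ Z (A (Suc i) j k))"
      by (metis ex_in_conv keys_eq_empty)
    then have "zf Z a" "a \<in> Poly_Mapping.keys (A (Suc i) j k)"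
      using keys_setZ by (auto simp: in_keys_iff lookup_setZ split: if_splits)
    moreover have "j \<in> B i" "zf Z (dg i j)" using j by (auto simp: Pb_def)
    ultimately show "k \<in> Pb (Suc i)"
      using H_deg[OF iS, of j k a] k unfolding Pb_def by (auto, metis zf_add)
  next
    assume kP: "k \<in> Pb (Suc i)"
    then have k: "k \<in> B (Suc i)" and kz: "zf Z (dg (Suc i) k)" by (auto simp: Pb_def)
    have "\<exists>j\<in>B i. A (Suc i) j k \<noteq> 0"
    proof (rule ccontr)
      assume "\<not> ?thesis"
      then have z: "\<And>j. j \<in> B i \<Longrightarrow> A (Suc i) j k = 0" by auto
      define w where "w = (\<lambda>l. if l = k then 1 else (0::('v,'k) mpoly))"
      have fin: "finite (B (Suc i))" using H_fin Suc.prems by blast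
      have wv: "w \<in> vecs UNIV (B (Suc i))" using k by (auto simp: vecs_def w_def)
      have "mat_app (B (Suc i)) (B (Suc i - 1)) (A (Suc i)) w = (\<lambda>_. 0)"
        using fin k z by (auto simp: mat_app_def w_def fun_eq_iff if_distrib cong: if_cong)
      moreover have "Poly_Mapping.lookup (w k) 0 \<noteq> 0" by (simp add: w_def)
      ultimately show False using nonmin[OF iS wv _ k] by blast
    qed
    then obtain j where j: "j \<in> B i" and nz: "A (Suc i) j k \<noteq> 0" by blast
    have "zf Z (dg i j)" using E2[OF iS, of j k] j k kz nz by simp
    moreover have "setZ Z (A (Suc i) j k) = A (Suc i) j k" using E1[OF iS, of j k] j k kz by simp
    ultimately show "k \<in> pruned_basis Z B A (Suc i)"
      using j k nz IH by (auto simp: Pb_def)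
  qed
  then show ?case by blast
qed

lemma finPb: "i \<le> t \<Longrightarrow> finite (Pb i)"
  using H_fin Pb_sub finite_subset by blast

lemma L:
  assumes i: "i \<in> {1..t}" and x: "x \<in> vecs R (Pb i)"
  shows "mat_app (Pb i) (Pb (i - 1)) (pruned_mats Z A i) x = mat_app (B i) (B (i - 1)) (A i) x"
proof
  fix j
  have fin: "finite (B i)" using H_fin i by simp
  have x0: "\<And>k. k \<notin> Pb i \<Longrightarrow> x k = 0" using x by (auto simp: vecs_def)
  show "mat_app (Pb i) (Pb (i - 1)) (pruned_mats Z A i) x j = mat_app (B i) (B (i - 1)) (A i) x j"
  proof (cases "j \<in> Pb (i - 1)")
    case True
    then have jB: "j \<in> B (i - 1)" by (auto simp: Pb_def)
    have "(\<Sum>k\<in>Pb i. setZ Z (A i j k) * x k) = (\<Sum>k\<in>B i. A i j k * x k)"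
    proof (rule sum.mono_neutral_cong_left[OF fin Pb_sub])
      show "\<forall>k\<in>B i - Pb i. A i j k * x k = 0" using x0 by auto
      show "\<And>k. k \<in> Pb i \<Longrightarrow> setZ Z (A i j k) * x k = A i j k * x k"
        using E1[OF i jB] by (auto simp: Pb_def)
    qed
    then show ?thesis using True jB by (simp add: mat_app_def pruned_mats_def)
  next
    case False
    have "(\<Sum>k\<in>B i. A i j k * x k) = 0" if jB: "j \<in> B (i - 1)"
    proof (rule sum.neutral, intro ballI)
      fix k assume k: "k \<in> B i"
      show "A i j k * x k = 0"
      proof (cases "k \<in> Pb i")
        case True
        then have "A i j k = 0" using E2[OF i jB k] False jB by (auto simp: Pb_def)
        then show ?thesis by simp
      next
        case False then show ?thesis using x0 by simp
      qed
    qed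
    then show ?thesis using False by (simp add: mat_app_def)
  qed
qed

lemma IMG:
  assumes i: "i \<in> {1..t}" and y: "y \<in> vecs (polyT Z) (Pb i)"
  shows "mat_app (B i) (B (i - 1)) (A i) y \<in> vecs (polyT Z) (Pb (i - 1))"
proof -
  have "mat_app (Pb i) (Pb (i - 1)) (pruned_mats Z A i) y \<in> vecs (polyT Z) (Pb (i - 1))"
  proof -
    have "setZ Z (\<Sum>k\<in>Pb i. setZ Z (A i j k) * y k) = (\<Sum>k\<in>Pb i. setZ Z (A i j k) * y k)" for j
      unfolding setZ_sum setZ_mult using y
      by (intro sum.cong refl) (auto simp: vecs_def polyT_iff)
    then show ?thesis by (auto simp: vecs_def mat_app_def pruned_mats_def polyT_iff)
  qed
  then show ?thesis using L[OF i y] by simp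
qed

lemma PROJ:
  assumes i: "i < t" and x: "x \<in> vecs (polyT Z) (Pb i)" and y: "y \<in> vecs UNIV (B (Suc i))"
    and xy: "x = mat_app (B (Suc i)) (B i) (A (Suc i)) y"
  shows "x \<in> mat_app (Pb (Suc i)) (Pb i) (pruned_mats Z A (Suc i)) ` vecs (polyT Z) (Pb (Suc i))"
proof -
  have iS: "Suc i \<in> {1..t}" using i by simp
  define y' where "y' = (\<lambda>k. if k \<in> Pb (Suc i) then setZ Z (y k) else 0)"
  have y'v: "y' \<in> vecs (polyT Z) (Pb (Suc i))"
    by (auto simp: vecs_def y'_def setZ_in_polyT)
  have "mat_app (B (Suc i)) (B i) (A (Suc i)) y' = x"
  proof
    fix j
    show "mat_app (B (Suc i)) (B i) (A (Suc i)) y' j = x j"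
    proof (cases "j \<in> Pb i")
      case True
      then have jB: "j \<in> B i" and jz: "zf Z (dg i j)" by (auto simp: Pb_def)
      have "x j = setZ Z (x j)" using x True by (auto simp: vecs_def polyT_iff)
      also have "\<dots> = (\<Sum>k\<in>B (Suc i). setZ Z (A (Suc i) j k) * setZ Z (y k))"
        using jB by (simp add: xy mat_app_def setZ_sum setZ_mult)
      also have "\<dots> = (\<Sum>k\<in>B (Suc i). A (Suc i) j k * y' k)"
      proof (rule sum.cong[OF refl])
        fix k assume k: "k \<in> B (Suc i)"
        show "setZ Z (A (Suc i) j k) * setZ Z (y k) = A (Suc i) j k * y' k"
        proof (cases "zf Z (dg (Suc i) k)")
          case True then show ?thesis using E1[OF iS, of j k] jB k
            by (auto simp: y'_def Pb_def)
        next
          case False then show ?thesis using E3[OF iS, of j k] jB jz k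
            by (auto simp: y'_def Pb_def)
        qed
      qed
      finally show ?thesis using jB by (simp add: mat_app_def)
    next
      case False
      then have xj: "x j = 0" using x by (auto simp: vecs_def)
      have "(\<Sum>k\<in>B (Suc i). A (Suc i) j k * y' k) = 0" if jB: "j \<in> B i"
      proof (rule sum.neutral, intro ballI)
        fix k assume k: "k \<in> B (Suc i)"
        show "A (Suc i) j k * y' k = 0"
        proof (cases "k \<in> Pb (Suc i)")
          case True
          then have "A (Suc i) j k = 0" using E2[OF iS, of j k] False jB k by (auto simp: Pb_def)
          then show ?thesis by simp
        next
          case False then show ?thesis by (simp add: y'_def)
        qed
      qed
      then show ?thesis using xj by (simp add: mat_app_def)
    qed
  qed
  then have "mat_app (Pb (Suc i)) (Pb i) (pruned_mats Z A (Suc i)) y' = x"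
    using L[OF iS y'v] by simp
  then show ?thesis using y'v by blast
qed


lemma aug_T: "x \<in> vecs (polyT Z) (B 0) \<Longrightarrow> setZ Z (aug \<epsilon> (B 0) x) = aug \<epsilon> (B 0) x"
  unfolding aug_def setZ_sum setZ_mult
proof (intro sum.cong refl)
  fix j assume x: "x \<in> vecs (polyT Z) (B 0)" and j: "j \<in> B 0"
  have "setZ Z (\<epsilon> j) = \<epsilon> j"
    by (rule setZ_id) (use H_eps[OF j] B0_zf[OF j] in auto)
  moreover have "setZ Z (x j) = x j" using x j by (auto simp: vecs_def polyT_iff)
  ultimately show "setZ Z (\<epsilon> j) * setZ Z (x j) = \<epsilon> j * x j" by simp
qed

lemma main: "is_min_free_res (polyT Z) (setZ Z ` I) t (pruned_basis Z B A) (pruned_mats Z A) \<epsilon>"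
  unfolding is_min_free_res_def is_free_res_def
proof (intro conjI ballI allI impI)
  fix i assume "i \<le> t" then show "finite (pruned_basis Z B A i)" using pb finPb by simp
next
  fix i j k show "pruned_mats Z A i j k \<in> polyT Z" by (simp add: pruned_mats_def setZ_in_polyT)
next
  fix j assume "j \<in> pruned_basis Z B A 0"
  then have j: "j \<in> B 0" by simp
  have "setZ Z (\<epsilon> j) = \<epsilon> j"
    by (rule setZ_id) (use H_eps[OF j] B0_zf[OF j] in auto)
  then show "\<epsilon> j \<in> polyT Z" by (simp add: polyT_iff)
next
  fix i j k assume i: "i \<in> {1..t}" and j: "j \<in> pruned_basis Z B A (i - 1)" and k: "k \<in> pruned_basis Z B A i"
  have "pruned_basis Z B A (i - 1) = Pb (i - 1)" "pruned_basis Z B A i = Pb i" using pb i by auto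
  then have "j \<in> B (i - 1)" "k \<in> B i" using j k Pb_sub by blast+
  then show "Poly_Mapping.lookup (pruned_mats Z A i j k) 0 = 0"
    using H_min[OF i] by (simp add: pruned_mats_def)
next
  fix a :: "('v,'k) mpoly" assume a: "a \<in> polyT Z"
  obtain x where x: "x \<in> vecs UNIV (B 0)" "a - aug \<epsilon> (B 0) x \<in> I" using H_surj by blast
  define x' where "x' = (\<lambda>j. setZ Z (x j))"
  have x'v: "x' \<in> vecs (polyT Z) (B 0)" using x(1) by (auto simp: vecs_def x'_def setZ_in_polyT)
  have "setZ Z (a - aug \<epsilon> (B 0) x) = a - aug \<epsilon> (B 0) x'"
  proof -
    have "setZ Z (aug \<epsilon> (B 0) x) = setZ Z (aug \<epsilon> (B 0) x')"
      unfolding aug_def setZ_sum setZ_mult x'_def by simp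
    then show ?thesis using a aug_T[OF x'v] by (simp add: setZ_diff polyT_iff)
  qed
  then have "a - aug \<epsilon> (B 0) x' \<in> setZ Z ` I" using x(2) by (metis image_eqI)
  then show "\<exists>x\<in>vecs (polyT Z) (pruned_basis Z B A 0). a - aug \<epsilon> (pruned_basis Z B A 0) x \<in> setZ Z ` I"
    using x'v by auto
next
  show "{x \<in> vecs (polyT Z) (pruned_basis Z B A 0). aug \<epsilon> (pruned_basis Z B A 0) x \<in> setZ Z ` I} =
    (if 0 < t then mat_app (pruned_basis Z B A 1) (pruned_basis Z B A 0) (pruned_mats Z A 1) ` vecs (polyT Z) (pruned_basis Z B A 1)
     else {\<lambda>_. 0})" (is "?L = ?R")
  proof
    show "?L \<subseteq> ?R"
    proof
      fix x assume "x \<in> ?L"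
      then have x: "x \<in> vecs (polyT Z) (B 0)" "aug \<epsilon> (B 0) x \<in> setZ Z ` I" by auto
      then obtain f where f: "f \<in> I" "aug \<epsilon> (B 0) x = setZ Z f" by auto
      have "aug \<epsilon> (B 0) x \<in> I" using f monomial_setZ_in[OF mon] by simp
      moreover have "x \<in> vecs UNIV (B 0)" using x(1) vecs_mono by blast
      ultimately have xk: "x \<in> (if 0 < t then mat_app (B 1) (B 0) (A 1) ` vecs UNIV (B 1) else {\<lambda>_. 0})"
        using H_ker0 by blast
      show "x \<in> ?R"
      proof (cases "0 < t")
        case True
        then obtain y where y: "y \<in> vecs UNIV (B (Suc 0))" "x = mat_app (B (Suc 0)) (B 0) (A (Suc 0)) y"
          using xk by auto
        have "x \<in> vecs (polyT Z) (Pb 0)" using x Pb0 by simp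
        from PROJ[OF True this y] True show ?thesis using pb[of 1] Pb0 by simp
      next
        case False then show ?thesis using xk by simp
      qed
    qed
  next
    show "?R \<subseteq> ?L"
    proof
      fix x assume xR: "x \<in> ?R"
      show "x \<in> ?L"
      proof (cases "0 < t")
        case True
        then obtain y where y: "y \<in> vecs (polyT Z) (Pb 1)" "x = mat_app (Pb 1) (Pb 0) (pruned_mats Z A 1) y"
          using xR pb[of 1] Pb0 by auto
        have i1: "(1::nat) \<in> {1..t}" using True by simp
        have xA: "x = mat_app (B 1) (B 0) (A 1) y" using L[OF i1 y(1)] y(2) by simp
        have "y \<in> vecs UNIV (B 1)" using y(1) vecs_mono[OF Pb_sub] by blast
        then have "x \<in> {x \<in> vecs UNIV (B 0). aug \<epsilon> (B 0) x \<in> I}" using H_ker0 True xA by auto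
        then have "aug \<epsilon> (B 0) x \<in> I" by simp
        moreover have xv: "x \<in> vecs (polyT Z) (B 0)" using IMG[OF i1 y(1)] xA Pb0 by simp
        ultimately have "aug \<epsilon> (B 0) x \<in> setZ Z ` I" using aug_T[OF xv] by (metis image_eqI)
        with xv show ?thesis by simp
      next
        case False
        then have "x = (\<lambda>_. 0)" using xR by simp
        moreover have "aug \<epsilon> (B 0) (\<lambda>_. 0) = setZ Z 0" by (simp add: aug_def)
        moreover have "setZ Z 0 \<in> setZ Z ` I" using I0 by blast
        ultimately show ?thesis by (auto simp: vecs_def)
      qed
    qed
  qed
next
  fix i assume i: "i \<in> {1..t}"
  have pbi: "pruned_basis Z B A i = Pb i" "pruned_basis Z B A (i - 1) = Pb (i - 1)" using pb i by auto
  show "{x \<in> vecs (polyT Z) (pruned_basis Z B A i).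
           mat_app (pruned_basis Z B A i) (pruned_basis Z B A (i - 1)) (pruned_mats Z A i) x = (\<lambda>_. 0)} =
          (if i < t then mat_app (pruned_basis Z B A (Suc i)) (pruned_basis Z B A i) (pruned_mats Z A (Suc i)) `
                         vecs (polyT Z) (pruned_basis Z B A (Suc i))
           else {\<lambda>_. 0})" (is "?L = ?R")
  proof
    show "?L \<subseteq> ?R"
    proof
      fix x assume "x \<in> ?L"
      then have x: "x \<in> vecs (polyT Z) (Pb i)" "mat_app (Pb i) (Pb (i - 1)) (pruned_mats Z A i) x = (\<lambda>_. 0)"
        using pbi by auto
      have "mat_app (B i) (B (i - 1)) (A i) x = (\<lambda>_. 0)" using L[OF i x(1)] x(2) by simp
      moreover have "x \<in> vecs UNIV (B i)" using x(1) vecs_mono[OF Pb_sub] by blast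
      ultimately have xk: "x \<in> (if i < t then mat_app (B (Suc i)) (B i) (A (Suc i)) ` vecs UNIV (B (Suc i)) else {\<lambda>_. 0})"
        using H_ker[OF i] by blast
      show "x \<in> ?R"
      proof (cases "i < t")
        case True
        then obtain y where y: "y \<in> vecs UNIV (B (Suc i))" "x = mat_app (B (Suc i)) (B i) (A (Suc i)) y"
          using xk by auto
        from PROJ[OF True x(1) y] True show ?thesis using pb[of "Suc i"] pbi by simp
      next
        case False then show ?thesis using xk by simp
      qed
    qed
  next
    show "?R \<subseteq> ?L"
    proof
      fix x assume xR: "x \<in> ?R"
      show "x \<in> ?L"
      proof (cases "i < t")
        case True
        then obtain y where y: "y \<in> vecs (polyT Z) (Pb (Suc i))"
            "x = mat_app (Pb (Suc i)) (Pb i) (pruned_mats Z A (Suc i)) y"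
          using xR pb[of "Suc i"] pbi by auto
        have iS: "Suc i \<in> {1..t}" using True by simp
        have xA: "x = mat_app (B (Suc i)) (B i) (A (Suc i)) y" using L[OF iS y(1)] y(2) by simp
        have "y \<in> vecs UNIV (B (Suc i))" using y(1) vecs_mono[OF Pb_sub] by blast
        then have "x \<in> {x \<in> vecs UNIV (B i). mat_app (B i) (B (i - 1)) (A i) x = (\<lambda>_. 0)}"
          using H_ker[OF i] True xA by auto
        then have "mat_app (B i) (B (i - 1)) (A i) x = (\<lambda>_. 0)" by simp
        moreover have xv: "x \<in> vecs (polyT Z) (Pb i)" using IMG[OF iS y(1)] xA by simp
        ultimately have "mat_app (Pb i) (Pb (i - 1)) (pruned_mats Z A i) x = (\<lambda>_. 0)"
          using L[OF i xv] by simp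
        with xv show ?thesis using pbi by simp
      next
        case False
        then have "x = (\<lambda>_. 0)" using xR by simp
        then show ?thesis by (auto simp: vecs_def)
      qed
    qed
  qed
qed

end

theorem mainTheorem2:
  fixes I :: "('v::finite, 'k::comm_ring_1) mpoly set"
    and Z :: "'v set"
    and t :: nat
    and B :: "nat \<Rightarrow> nat set"
    and A :: "nat \<Rightarrow> nat \<Rightarrow> nat \<Rightarrow> ('v, 'k) mpoly"
    and \<epsilon> :: "nat \<Rightarrow> ('v, 'k) mpoly"
    and dg :: "nat \<Rightarrow> nat \<Rightarrow> ('v \<Rightarrow>\<^sub>0 nat)"
  assumes K_field_or_Z:
      "(\<forall>x::'k. x \<noteq> 0 \<longrightarrow> x dvd 1)
       \<or> (\<exists>\<phi>::'k \<Rightarrow> int. bij \<phi> \<and> (\<forall>x y. \<phi> (x + y) = \<phi> x + \<phi> y \<and> \<phi> (x * y) = \<phi> x * \<phi> y) \<and> \<phi> 1 = 1)"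
    and "monomial_ideal I"
    and "is_min_free_res UNIV I t B A \<epsilon>"
    and "multigraded t B A \<epsilon> dg"
  shows "\<exists>\<epsilon>'. is_min_free_res (polyT Z) (setZ Z ` I) t (pruned_basis Z B A) (pruned_mats Z A) \<epsilon>'"
proof -
  interpret prune_setup I Z t B A \<epsilon> dg
    using assms(2-4) by unfold_locales
  show ?thesis using main by blast
qed

end
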